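(* For all integers $k,n$ with $n\geq 3$ and $2\leq k\leq n$, $\mathrm{ldim}_f(K_k\square K_n)=\frac{n}{2}$.
   Context: $K_k$ denotes the complete graph on $k$ vertices; $d$ is the shortest-path distance. For an edge $uv$ of a connected graph $X$, $L_X(uv)=\{x\in V(X): d_X(u,x)\neq d_X(v,x)\}$. A function $f:V(X)\to[0,1]$ is a local resolving function of $X$ if $\sum_{x\in L_X(uv)}f(x)\geq 1$ for every edge $uv$; $\mathrm{ldim}_f(X)$ is the minimum of $\sum_{v}f(v)$ over all local resolving functions. The Cartesian product $G\square H$ has vertex set $V(G)\times V(H)$, with $(u_1,v_1)$ adjacent to $(u_2,v_2)$ iff ($u_1u_2\in E(G)$ and $v_1=v_2$) or ($u_1=u_2$ and $v_1v_2\in E(H)$). *)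

theory Defs
  imports Complex_Main
begin

text \<open>A graph is given by a vertex set V and a symmetric adjacency relation E.\<close>

inductive walk_len :: "'a set \<Rightarrow> ('a \<Rightarrow> 'a \<Rightarrow> bool) \<Rightarrow> 'a \<Rightarrow> 'a \<Rightarrow> nat \<Rightarrow> bool"
  for V E where
  walk_nil: "u \<in> V \<Longrightarrow> walk_len V E u u 0"
| walk_step: "u \<in> V \<Longrightarrow> E u w \<Longrightarrow> walk_len V E w v m \<Longrightarrow> walk_len V E u v (Suc m)"

text \<open>Shortest-path distance (meaningful for connected graphs).\<close>
definition gdist :: "'a set \<Rightarrow> ('a \<Rightarrow> 'a \<Rightarrow> bool) \<Rightarrow> 'a \<Rightarrow> 'a \<Rightarrow> nat" where
  "gdist V E u v = (LEAST m. walk_len V E u v m)"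

definition connected_graph :: "'a set \<Rightarrow> ('a \<Rightarrow> 'a \<Rightarrow> bool) \<Rightarrow> bool" where
  "connected_graph V E \<longleftrightarrow> (\<forall>u\<in>V. \<forall>v\<in>V. \<exists>m. walk_len V E u v m)"

definition K_verts :: "nat \<Rightarrow> nat set" where "K_verts k = {0..<k}"
definition K_adj :: "nat \<Rightarrow> nat \<Rightarrow> bool" where "K_adj i j \<longleftrightarrow> i \<noteq> j"

definition cart_verts :: "'a set \<Rightarrow> 'b set \<Rightarrow> ('a \<times> 'b) set" where
  "cart_verts VG VH = VG \<times> VH"
definition cart_adj :: "('a \<Rightarrow> 'a \<Rightarrow> bool) \<Rightarrow> ('b \<Rightarrow> 'b \<Rightarrow> bool) \<Rightarrow> 'a \<times> 'b \<Rightarrow> 'a \<times> 'b \<Rightarrow> bool" where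
  "cart_adj EG EH p q \<longleftrightarrow>
     (EG (fst p) (fst q) \<and> snd p = snd q) \<or> (fst p = fst q \<and> EH (snd p) (snd q))"

definition resolving_set_edge :: "'a set \<Rightarrow> ('a \<Rightarrow> 'a \<Rightarrow> bool) \<Rightarrow> 'a \<Rightarrow> 'a \<Rightarrow> 'a set" where
  "resolving_set_edge V E u v = {x \<in> V. gdist V E u x \<noteq> gdist V E v x}"

definition local_resolving_function :: "'a set \<Rightarrow> ('a \<Rightarrow> 'a \<Rightarrow> bool) \<Rightarrow> ('a \<Rightarrow> real) \<Rightarrow> bool" where
  "local_resolving_function V E f \<longleftrightarrow>
     (\<forall>x\<in>V. 0 \<le> f x \<and> f x \<le> 1) \<and>
     (\<forall>u\<in>V. \<forall>v\<in>V. E u v \<longrightarrow> (\<Sum>x\<in>resolving_set_edge V E u v. f x) \<ge> 1)"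

definition ldim_f :: "'a set \<Rightarrow> ('a \<Rightarrow> 'a \<Rightarrow> bool) \<Rightarrow> real" where
  "ldim_f V E = Inf {(\<Sum>x\<in>V. f x) | f. local_resolving_function V E f}"

end

theory Submission
  imports Defs
begin

definition ham :: "nat \<times> nat \<Rightarrow> nat \<times> nat \<Rightarrow> nat" where
  "ham p q = (if fst p = fst q then 0 else 1) + (if snd p = snd q then 0 else 1)"

lemma walk0: "walk_len V E u v 0 \<Longrightarrow> u = v"
  by (erule walk_len.cases) auto

lemma walk1: "walk_len V E u v (Suc 0) \<Longrightarrow> E u v"
  by (erule walk_len.cases) (auto dest: walk0)

lemma gdist_ham:
  assumes u: "u \<in> A \<times> B" and x: "x \<in> A \<times> B"
  shows "gdist (A \<times> B) (cart_adj K_adj K_adj) u x = ham u x"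
  unfolding gdist_def
proof (rule Least_equality)
  let ?V = "A \<times> B" and ?E = "cart_adj K_adj K_adj"
  obtain a b c d where ab: "u = (a,b)" and cd: "x = (c,d)" by fastforce
  have w: "(a,d) \<in> ?V" using u x ab cd by auto
  show "walk_len ?V ?E u x (ham u x)"
  proof (cases "a = c")
    case True
    then show ?thesis
    proof (cases "b = d")
      case True
      then show ?thesis using \<open>a = c\<close> ab cd u by (auto simp: ham_def intro: walk_nil)
    next
      case False
      then show ?thesis using \<open>a = c\<close> ab cd u x
        by (auto simp: ham_def cart_adj_def K_adj_def intro!: walk_step walk_nil)
    qed
  next
    case False
    then show ?thesis
    proof (cases "b = d")
      case True
      then show ?thesis using \<open>a \<noteq> c\<close> ab cd u x
        by (auto simp: ham_def cart_adj_def K_adj_def intro!: walk_step walk_nil)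
    next
      case False
      have e1: "?E u (a,d)" using False ab cd by (simp add: cart_adj_def K_adj_def)
      have e2: "?E (a,d) x" using \<open>a \<noteq> c\<close> ab cd by (simp add: cart_adj_def K_adj_def)
      have "walk_len ?V ?E u x (Suc (Suc 0))"
      proof -
        have "walk_len ?V ?E x x 0" by (rule walk_nil[OF x])
        then have "walk_len ?V ?E (a,d) x (Suc 0)" using w e2 by (rule walk_step[rotated 2])
        then show ?thesis using u e1 by (rule walk_step[rotated 2])
      qed
      then show ?thesis using \<open>a \<noteq> c\<close> False ab cd by (simp add: ham_def)
    qed
  qed
next
  fix m assume h: "walk_len (A \<times> B) (cart_adj K_adj K_adj) u x m"
  have "ham u x \<le> 2" by (simp add: ham_def)
  moreover
  { assume "m = 0" then have "u = x" using h walk0 by metis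
    then have "ham u x \<le> m" by (simp add: ham_def) }
  moreover
  { assume "m = Suc 0" then have "cart_adj K_adj K_adj u x" using h walk1 by metis
    then have "ham u x \<le> m" using \<open>m = Suc 0\<close>
      by (auto simp: ham_def cart_adj_def K_adj_def) }
  ultimately show "ham u x \<le> m" by linarith
qed

lemma res_col:
  assumes "b < n" "b' < n" "b \<noteq> b'" "a < k"
  shows "resolving_set_edge ({0..<k} \<times> {0..<n}) (cart_adj K_adj K_adj) (a,b) (a,b')
         = {0..<k} \<times> {b,b'}"
  using assms by (auto simp: resolving_set_edge_def gdist_ham ham_def split: if_splits)

lemma res_row:
  assumes "a < k" "a' < k" "a \<noteq> a'" "b < n"
  shows "resolving_set_edge ({0..<k} \<times> {0..<n}) (cart_adj K_adj K_adj) (a,b) (a',b)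
         = {a,a'} \<times> {0..<n}"
  using assms by (auto simp: resolving_set_edge_def gdist_ham ham_def split: if_splits)

lemma pair_bound:
  fixes C :: "nat \<Rightarrow> real"
  assumes n: "n \<ge> 2" and h: "\<And>b b'. b < n \<Longrightarrow> b' < n \<Longrightarrow> b \<noteq> b' \<Longrightarrow> C b + C b' \<ge> 1"
  shows "(\<Sum>b<n. C b) \<ge> real n / 2"
proof -
  let ?T = "\<Sum>b<n. C b"
  have inner: "(\<Sum>b'\<in>{..<n}-{b}. C b + C b') = (real n - 2) * C b + ?T" if "b < n" for b
  proof -
    have "(\<Sum>b'\<in>{..<n}-{b}. C b + C b') = real (n - 1) * C b + (?T - C b)"
      using that by (simp add: sum.distrib sum_diff1)
    then show ?thesis using n by (simp add: of_nat_diff algebra_simps)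
  qed
  have "(\<Sum>b<n. \<Sum>b'\<in>{..<n}-{b}. C b + C b') \<ge> (\<Sum>b<n. \<Sum>b'\<in>{..<n}-{b}. (1::real))"
    by (intro sum_mono) (auto intro: h)
  moreover have "(\<Sum>b<n. \<Sum>b'\<in>{..<n}-{b}. (1::real)) = real n * (real n - 1)"
    using n by (simp add: of_nat_diff)
  moreover have "(\<Sum>b<n. \<Sum>b'\<in>{..<n}-{b}. C b + C b') = (2 * real n - 2) * ?T"
  proof -
    have "(\<Sum>b<n. \<Sum>b'\<in>{..<n}-{b}. C b + C b') = (\<Sum>b<n. (real n - 2) * C b + ?T)"
      using inner by (intro sum.cong) auto
    also have "\<dots> = (real n - 2) * ?T + real n * ?T"
      by (simp add: sum.distrib sum_distrib_left)
    finally show ?thesis by (simp add: algebra_simps)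
  qed
  ultimately have "(2 * real n - 2) * ?T \<ge> real n * (real n - 1)" by simp
  then have "(real n - 1) * (2 * ?T - real n) \<ge> 0" by (simp add: algebra_simps)
  moreover have "real n - 1 > 0" using n by simp
  ultimately have "2 * ?T - real n \<ge> 0" by (simp add: zero_le_mult_iff)
  then show ?thesis by simp
qed

theorem theorem3p14:
  fixes k n :: nat
  assumes "n \<ge> 3" and "2 \<le> k" and "k \<le> n"
  shows "ldim_f (cart_verts (K_verts k) (K_verts n)) (cart_adj K_adj K_adj) = real n / 2"
proof -
  let ?V = "{0..<k} \<times> {0..<n}" and ?E = "cart_adj K_adj K_adj"
  have V: "cart_verts (K_verts k) (K_verts n) = ?V" by (simp add: cart_verts_def K_verts_def)
  define g :: "nat \<times> nat \<Rightarrow> real" where "g = (\<lambda>_. 1 / (2 * real k))"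
  have kpos: "real k > 0" using assms by simp
  have gsum: "(\<Sum>x\<in>?V. g x) = real n / 2"
    using kpos by (simp add: g_def)
  have glr: "local_resolving_function ?V ?E g"
    unfolding local_resolving_function_def
  proof (intro conjI ballI impI)
    fix x assume "x \<in> ?V"
    show "0 \<le> g x" using kpos by (simp add: g_def)
    show "g x \<le> 1" using kpos assms by (simp add: g_def)
  next
    fix u v assume u: "u \<in> ?V" and v: "v \<in> ?V" and e: "?E u v"
    obtain a b a' b' where uv: "u = (a,b)" "v = (a',b')" by fastforce
    show "1 \<le> sum g (resolving_set_edge ?V ?E u v)"
    proof (cases "a = a'")
      case True
      then have "b \<noteq> b'" using e uv by (auto simp: cart_adj_def K_adj_def)
      then have "resolving_set_edge ?V ?E u v = {0..<k} \<times> {b,b'}"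
        using res_col[of b n b' a k] u v uv True by auto
      moreover have "card ({0..<k} \<times> {b,b'}) = 2 * k" using \<open>b \<noteq> b'\<close>
        by (simp add: card_cartesian_product)
      ultimately show ?thesis using kpos by (simp add: g_def)
    next
      case False
      then have "b = b'" using e uv by (auto simp: cart_adj_def K_adj_def)
      then have "resolving_set_edge ?V ?E u v = {a,a'} \<times> {0..<n}"
        using res_row[of a k a' b n] u v uv False by auto
      moreover have "card ({a,a'} \<times> {0..<n}) = 2 * n" using False
        by (simp add: card_cartesian_product)
      ultimately show ?thesis using kpos assms by (simp add: g_def)
    qed
  qed
  have lower: "real n / 2 \<le> (\<Sum>x\<in>?V. f x)" if f: "local_resolving_function ?V ?E f" for f
  proof -
    define C where "C b = (\<Sum>a<k. f (a,b))" for b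
    have tot: "(\<Sum>x\<in>?V. f x) = (\<Sum>b<n. C b)"
    proof -
      have "(\<Sum>x\<in>?V. f x) = (\<Sum>a<k. \<Sum>b<n. f (a,b))"
        by (simp add: sum.cartesian_product atLeast0LessThan)
      also have "\<dots> = (\<Sum>b<n. C b)" unfolding C_def by (rule sum.swap)
      finally show ?thesis .
    qed
    have "C b + C b' \<ge> 1" if "b < n" "b' < n" "b \<noteq> b'" for b b'
    proof -
      have e: "?E (0,b) (0,b')" using that by (simp add: cart_adj_def K_adj_def)
      have "(0,b) \<in> ?V" "(0,b') \<in> ?V" using that assms by auto
      then have "1 \<le> sum f (resolving_set_edge ?V ?E (0,b) (0,b'))"
        using f e unfolding local_resolving_function_def by blast
      also have "resolving_set_edge ?V ?E (0,b) (0,b') = {0..<k} \<times> {b,b'}"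
        using res_col[of b n b' 0 k] that assms by auto
      also have "sum f ({0..<k} \<times> {b,b'}) = C b + C b'"
      proof -
        have "sum f ({0..<k} \<times> {b,b'}) = (\<Sum>a<k. \<Sum>y\<in>{b,b'}. f (a,y))"
          by (simp add: sum.cartesian_product atLeast0LessThan)
        also have "\<dots> = C b + C b'" unfolding C_def using that by (simp add: sum.distrib)
        finally show ?thesis .
      qed
      finally show ?thesis .
    qed
    then have "(\<Sum>b<n. C b) \<ge> real n / 2" using pair_bound[of n C] assms by auto
    then show ?thesis using tot by simp
  qed
  show ?thesis unfolding ldim_f_def V
  proof (rule cInf_eq_minimum)
    show "real n / 2 \<in> {sum f ?V |f. local_resolving_function ?V ?E f}"
      using glr gsum by (metis (mono_tags, lifting) mem_Collect_eq)
  qed (use lower in auto)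
qed

end
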